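(* Let $n=2^r$ and $m>n$. Let $\mathcal R'$ be the random restriction on the variables of the binary $\mathrm{PHP}^m_n$ which, for each pigeon $i$ independently, selects a bit position $j\in[r]$ uniformly at random and sets $P_{i,j}$ to $0$ or $1$ with probability $\frac12$ each. Then the probability (over $\mathcal R'$) that some Sherali–Adams refutation of the binary $\mathrm{PHP}^m_n$ restricted by $\mathcal R'$ contains no term mentioning at least $\frac{n}{2\log_2 n}$ pigeons is at most $e^{-n/(32\log_2^2 n)}$.
   Context: Binary Pigeonhole Principle $\mathrm{PHP}^m_n$ ($n=2^r$): pigeons $[m]$, holes $[n]$ with distinct $r$-bit representations $a_1\dots a_r$; variables $P_{i,j}$ ($i\in[m]$, $j\in[r]$), the $j$th bit of pigeon $i$'s hole; $X^1=X$, $X^0=\neg X$. Clauses: for every hole $a$ and pigeons $i\ne i'$, $\bigvee_j P_{i,j}^{1-a_j}\vee\bigvee_j P_{i',j}^{1-a_j}$. The restricted formula is obtained by substituting the values fixed by $\mathcal R'$. Sherali–Adams (SA): for every conjunction $D$ of literals (as a set; $\emptyset$ empty) there is a real variable (term) $Z_D$, $Z_\emptyset=1$. Lifts by $D$: of a clause $l_1\vee\dots\vee l_t$, $Z_{l_1\wedge D}+\dots+Z_{l_t\wedge D}\ge Z_D$; of negation equalities, $Z_{v\wedge D}+Z_{\neg v\wedge D}=Z_D$; of bounds, $0\le Z_{l\wedge D}\le Z_D$. An SA refutation is a set of lifted constraints with empty common real solution set; it contains the terms occurring in its constraints. A term $Z_D$ mentions pigeon $i$ if $D$ contains a literal of some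 $P_{i,j}$. *)

theory Defs
  imports Complex_Main "HOL-Library.FuncSet"
begin

text \<open>Variables of the binary PHP: (i, j) stands for P_{i,j}, pigeon i < m, bit j < r
  (0-indexed). A literal is a variable with a polarity: (v, True) = v, (v, False) = not v.
  A conjunction D of literals is a (finite) set of literals; Z_D is Z D.\<close>

type_synonym var = "nat \<times> nat"
type_synonym lit = "var \<times> bool"

definition hole_bit :: "nat \<Rightarrow> nat \<Rightarrow> bool" where
  "hole_bit a j = odd (a div 2 ^ j)"

definition php_clause :: "nat \<Rightarrow> nat \<Rightarrow> nat \<Rightarrow> nat \<Rightarrow> lit set" where
  "php_clause r a i i' =
     {((i, j), \<not> hole_bit a j) | j. j < r} \<union> {((i', j), \<not> hole_bit a j) | j. j < r}"

definition php_clauses :: "nat \<Rightarrow> nat \<Rightarrow> lit set set" where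
  "php_clauses m r = {php_clause r a i i' | a i i'. a < 2 ^ r \<and> i < m \<and> i' < m \<and> i \<noteq> i'}"

text \<open>A restriction from R': for each pigeon i, rho i = (j, b): bit position j < r is set to b.
  The sample space is all such choices; R' is the uniform distribution on it.\<close>
definition restrictions :: "nat \<Rightarrow> nat \<Rightarrow> (nat \<Rightarrow> nat \<times> bool) set" where
  "restrictions m r = {..<m} \<rightarrow>\<^sub>E ({..<r} \<times> (UNIV :: bool set))"

definition is_fixed :: "(nat \<Rightarrow> nat \<times> bool) \<Rightarrow> var \<Rightarrow> bool" where
  "is_fixed \<rho> v = (fst (\<rho> (fst v)) = snd v)"

definition lit_true :: "(nat \<Rightarrow> nat \<times> bool) \<Rightarrow> lit \<Rightarrow> bool" where
  "lit_true \<rho> l = (is_fixed \<rho> (fst l) \<and> snd (\<rho> (fst (fst l))) = snd l)"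

definition restr_vars :: "nat \<Rightarrow> nat \<Rightarrow> (nat \<Rightarrow> nat \<times> bool) \<Rightarrow> var set" where
  "restr_vars m r \<rho> = {(i, j). i < m \<and> j < r \<and> \<not> is_fixed \<rho> (i, j)}"

definition restr_clauses :: "nat \<Rightarrow> nat \<Rightarrow> (nat \<Rightarrow> nat \<times> bool) \<Rightarrow> lit set set" where
  "restr_clauses m r \<rho> =
     {{l \<in> C. \<not> is_fixed \<rho> (fst l)} | C. C \<in> php_clauses m r \<and> \<not> (\<exists>l\<in>C. lit_true \<rho> l)}"

datatype sa_constr =
    Clause_lift "lit set" "lit set"
  | Neg_lift var "lit set"
  | Lower_lift lit "lit set"
  | Upper_lift lit "lit set"

fun sa_holds :: "(lit set \<Rightarrow> real) \<Rightarrow> sa_constr \<Rightarrow> bool" where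
  "sa_holds Z (Clause_lift C D) = ((\<Sum>l\<in>C. Z (insert l D)) \<ge> Z D)"
| "sa_holds Z (Neg_lift v D) = (Z (insert (v, True) D) + Z (insert (v, False) D) = Z D)"
| "sa_holds Z (Lower_lift l D) = (0 \<le> Z (insert l D))"
| "sa_holds Z (Upper_lift l D) = (Z (insert l D) \<le> Z D)"

fun sa_terms :: "sa_constr \<Rightarrow> lit set set" where
  "sa_terms (Clause_lift C D) = insert D ((\<lambda>l. insert l D) ` C)"
| "sa_terms (Neg_lift v D) = {insert (v, True) D, insert (v, False) D, D}"
| "sa_terms (Lower_lift l D) = {insert l D}"
| "sa_terms (Upper_lift l D) = {insert l D, D}"

definition conj_ok :: "var set \<Rightarrow> lit set \<Rightarrow> bool" where
  "conj_ok V D = (finite D \<and> (\<forall>l\<in>D. fst l \<in> V))"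

fun sa_valid :: "nat \<Rightarrow> nat \<Rightarrow> (nat \<Rightarrow> nat \<times> bool) \<Rightarrow> sa_constr \<Rightarrow> bool" where
  "sa_valid m r \<rho> (Clause_lift C D) = (C \<in> restr_clauses m r \<rho> \<and> conj_ok (restr_vars m r \<rho>) D)"
| "sa_valid m r \<rho> (Neg_lift v D) = (v \<in> restr_vars m r \<rho> \<and> conj_ok (restr_vars m r \<rho>) D)"
| "sa_valid m r \<rho> (Lower_lift l D) = (fst l \<in> restr_vars m r \<rho> \<and> conj_ok (restr_vars m r \<rho>) D)"
| "sa_valid m r \<rho> (Upper_lift l D) = (fst l \<in> restr_vars m r \<rho> \<and> conj_ok (restr_vars m r \<rho>) D)"

definition sa_refutation :: "nat \<Rightarrow> nat \<Rightarrow> (nat \<Rightarrow> nat \<times> bool) \<Rightarrow> sa_constr set \<Rightarrow> bool" where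
  "sa_refutation m r \<rho> S =
     (finite S \<and> (\<forall>c\<in>S. sa_valid m r \<rho> c) \<and>
      \<not> (\<exists>Z :: lit set \<Rightarrow> real. Z {} = 1 \<and> (\<forall>c\<in>S. sa_holds Z c)))"

definition pigeons_of :: "lit set \<Rightarrow> nat set" where
  "pigeons_of D = {i. \<exists>j b. ((i, j), b) \<in> D}"

end

theory Submission
  imports Defs
begin

definition injs :: "nat \<Rightarrow> nat set \<Rightarrow> (nat \<Rightarrow> nat) set" where
  "injs N P = {x \<in> P \<rightarrow>\<^sub>E {..<N}. inj_on x P}"

definition Eavg :: "nat \<Rightarrow> nat set \<Rightarrow> ((nat \<Rightarrow> nat) \<Rightarrow> real) \<Rightarrow> real" where
  "Eavg N P g = (\<Sum>x\<in>injs N P. g x) / real (card (injs N P))"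

lemma finite_injs: "finite P \<Longrightarrow> finite (injs N P)"
  unfolding injs_def by (rule finite_subset[of _ "P \<rightarrow>\<^sub>E {..<N}"]) (auto intro: finite_PiE)

lemma injs_step_bij:
  assumes "i \<notin> Q"
  shows "bij_betw (\<lambda>(y, c). y(i := c)) (SIGMA y:injs N Q. {..<N} - y ` Q) (injs N (insert i Q))"
proof (rule bij_betw_imageI)
  show "inj_on (\<lambda>(y, c). y(i := c)) (SIGMA y:injs N Q. {..<N} - y ` Q)"
  proof (rule inj_onI, clarsimp)
    fix y c y' c'
    assume y: "y \<in> injs N Q" and y': "y' \<in> injs N Q" and e: "y(i := c) = y'(i := c')"
    have "c = c'" using fun_cong[OF e, of i] by simp
    moreover have "y = y'"
    proof
      fix k show "y k = y' k"
      proof (cases "k = i")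
        case True
        then have "k \<notin> Q" using assms by simp
        then show ?thesis using y y' unfolding injs_def by (auto simp: PiE_def extensional_def)
      next
        case False
        then show ?thesis using fun_cong[OF e, of k] by simp
      qed
    qed
    ultimately show "y = y' \<and> c = c'" by simp
  qed
  show "(\<lambda>(y, c). y(i := c)) ` (SIGMA y:injs N Q. {..<N} - y ` Q) = injs N (insert i Q)"
  proof (rule set_eqI, rule iffI)
    fix x assume "x \<in> (\<lambda>(y, c). y(i := c)) ` (SIGMA y:injs N Q. {..<N} - y ` Q)"
    then obtain y c where y: "y \<in> injs N Q" and c: "c < N" "c \<notin> y ` Q" and x: "x = y(i := c)" by auto
    have "y(i := c) \<in> insert i Q \<rightarrow>\<^sub>E {..<N}" using y c unfolding injs_def
      by (auto simp: PiE_def extensional_def Pi_def)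
    moreover have "inj_on (y(i := c)) (insert i Q)"
      using y c assms unfolding injs_def
      by (auto simp: inj_on_def)
    ultimately show "x \<in> injs N (insert i Q)" unfolding injs_def x by simp
  next
    fix x assume x: "x \<in> injs N (insert i Q)"
    define y where "y = restrict x Q"
    have "y \<in> injs N Q" using x unfolding injs_def y_def
      by (auto simp: PiE_def Pi_def inj_on_def)
    moreover have "x i < N" "x i \<notin> y ` Q" using x assms unfolding injs_def y_def
      by (auto simp: PiE_def Pi_def inj_on_def)
    moreover have "x = y(i := x i)"
    proof
      fix k show "x k = (y(i := x i)) k"
        using x unfolding injs_def y_def by (auto simp: PiE_def extensional_def)
    qed
    ultimately show "x \<in> (\<lambda>(y, c). y(i := c)) ` (SIGMA y:injs N Q. {..<N} - y ` Q)"
      by (auto intro!: image_eqI[where x="(y, x i)"])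
  qed
qed

lemma injs_step_sum:
  assumes "finite Q" "i \<notin> Q" "\<And>x y. (\<forall>k\<in>Q. x k = y k) \<Longrightarrow> g x = g y"
  shows "(\<Sum>x\<in>injs N (insert i Q). g x) = real (N - card Q) * (\<Sum>y\<in>injs N Q. g y)"
proof -
  have "(\<Sum>x\<in>injs N (insert i Q). g x) = (\<Sum>p\<in>(SIGMA y:injs N Q. {..<N} - y ` Q). g ((\<lambda>(y, c). y(i := c)) p))"
    using sum.reindex_bij_betw[OF injs_step_bij[OF assms(2)], of g, symmetric] by simp
  also have "\<dots> = (\<Sum>y\<in>injs N Q. \<Sum>c\<in>{..<N} - y ` Q. g (y(i := c)))"
    by (subst sum.Sigma) (auto simp: finite_injs assms(1) split_def)
  also have "\<dots> = (\<Sum>y\<in>injs N Q. \<Sum>c\<in>{..<N} - y ` Q. g y)"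
  proof (rule sum.cong[OF refl], rule sum.cong[OF refl])
    fix y c show "g (y(i := c)) = g y" using assms(2) by (intro assms(3)) auto
  qed
  also have "\<dots> = (\<Sum>y\<in>injs N Q. real (N - card Q) * g y)"
  proof (rule sum.cong[OF refl])
    fix y assume y: "y \<in> injs N Q"
    have "card ({..<N} - y ` Q) = N - card (y ` Q)"
      using y unfolding injs_def by (subst card_Diff_subset) (auto simp: PiE_def Pi_def assms(1))
    also have "card (y ` Q) = card Q" using y unfolding injs_def by (simp add: card_image)
    finally show "(\<Sum>c\<in>{..<N} - y ` Q. g y) = real (N - card Q) * g y" by simp
  qed
  also have "\<dots> = real (N - card Q) * (\<Sum>y\<in>injs N Q. g y)" by (simp add: sum_distrib_left)
  finally show ?thesis .
qed

lemma injs_card_pos: "finite P \<Longrightarrow> card P \<le> N \<Longrightarrow> card (injs N P) > 0"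
proof (induction P rule: finite_induct)
  case empty
  have "injs N {} = {\<lambda>_. undefined}" unfolding injs_def by auto
  then show ?case by simp
next
  case (insert i Q)
  have "real (card (injs N (insert i Q))) = (\<Sum>x\<in>injs N (insert i Q). 1)" by simp
  also have "\<dots> = real (N - card Q) * (\<Sum>y\<in>injs N Q. 1)"
    by (rule injs_step_sum) (use insert in auto)
  finally have "real (card (injs N (insert i Q))) = real (N - card Q) * real (card (injs N Q))" by simp
  moreover have "card (injs N Q) > 0" using insert by simp
  moreover have "N - card Q > 0" using insert by simp
  ultimately show ?case by (metis of_nat_0_less_iff of_nat_mult mult_pos_pos)
qed

lemma Eavg_step:
  assumes "finite Q" "i \<notin> Q" "card Q < N" "\<And>x y. (\<forall>k\<in>Q. x k = y k) \<Longrightarrow> g x = g y"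
  shows "Eavg N (insert i Q) g = Eavg N Q g"
proof -
  have a: "(\<Sum>x\<in>injs N (insert i Q). g x) = real (N - card Q) * (\<Sum>y\<in>injs N Q. g y)"
    by (rule injs_step_sum) (use assms in auto)
  have "real (card (injs N (insert i Q))) = (\<Sum>x\<in>injs N (insert i Q). 1)" by simp
  also have "\<dots> = real (N - card Q) * (\<Sum>y\<in>injs N Q. 1)"
    by (rule injs_step_sum) (use assms in auto)
  finally have b: "real (card (injs N (insert i Q))) = real (N - card Q) * real (card (injs N Q))" by simp
  have "real (N - card Q) > 0" using assms by simp
  then show ?thesis unfolding Eavg_def a b by simp
qed

lemma Eavg_mono_set:
  assumes "finite F" "finite Q" "card (Q \<union> F) \<le> N" "\<And>x y. (\<forall>k\<in>Q. x k = y k) \<Longrightarrow> g x = g y"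
  shows "Eavg N (Q \<union> F) g = Eavg N Q g"
  using assms(1,3)
proof (induction F rule: finite_induct)
  case empty then show ?case by simp
next
  case (insert i F)
  show ?case
  proof (cases "i \<in> Q \<union> F")
    case True
    then have "Q \<union> insert i F = Q \<union> F" by auto
    then show ?thesis using insert by simp
  next
    case False
    have fin: "finite (Q \<union> F)" using insert assms by simp
    have c: "card (Q \<union> F) < N" using insert.prems False fin by simp
    have "Eavg N (Q \<union> insert i F) g = Eavg N (insert i (Q \<union> F)) g" by simp
    also have "\<dots> = Eavg N (Q \<union> F) g"
      by (rule Eavg_step[OF fin False c]) (use assms(4) in auto)
    also have "\<dots> = Eavg N Q g" using insert c by simp
    finally show ?thesis .
  qed
qed

lemma Eavg_sub:
  assumes "finite P" "Q \<subseteq> P" "card P \<le> N" "\<And>x y. (\<forall>k\<in>Q. x k = y k) \<Longrightarrow> g x = g y"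
  shows "Eavg N P g = Eavg N Q g"
proof -
  have "P = Q \<union> P" using assms by auto
  then show ?thesis using Eavg_mono_set[of P Q N g] assms finite_subset by metis
qed


definition val :: "(nat \<Rightarrow> nat \<times> bool) \<Rightarrow> (nat \<Rightarrow> nat) \<Rightarrow> nat \<Rightarrow> nat \<Rightarrow> bool" where
  "val \<rho> x i j = (hole_bit (x i) j \<noteq> (hole_bit (x i) (fst (\<rho> i)) \<noteq> snd (\<rho> i)))"

definition ind :: "(nat \<Rightarrow> nat \<times> bool) \<Rightarrow> (nat \<Rightarrow> nat) \<Rightarrow> lit set \<Rightarrow> real" where
  "ind \<rho> x D = (if (\<forall>l\<in>D. val \<rho> x (fst (fst l)) (snd (fst l)) = snd l) then 1 else 0)"

definition Zf :: "nat \<Rightarrow> (nat \<Rightarrow> nat \<times> bool) \<Rightarrow> lit set \<Rightarrow> real" where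
  "Zf N \<rho> D = Eavg N (pigeons_of D) (\<lambda>x. ind \<rho> x D)"

lemma pigeons_of_eq: "pigeons_of D = (\<lambda>l. fst (fst l)) ` D"
  unfolding pigeons_of_def by force

lemma pigeons_of_insert: "pigeons_of (insert l D) = insert (fst (fst l)) (pigeons_of D)"
  unfolding pigeons_of_eq by simp

lemma finite_pigeons: "finite D \<Longrightarrow> finite (pigeons_of D)"
  unfolding pigeons_of_eq by simp

lemma ind_resp: "\<forall>k\<in>Q. x k = y k \<Longrightarrow> pigeons_of D \<subseteq> Q \<Longrightarrow> ind \<rho> x D = ind \<rho> y D"
  unfolding ind_def val_def pigeons_of_eq by (smt (verit) image_subset_iff)

lemma val_fixed: "val \<rho> x i (fst (\<rho> i)) = snd (\<rho> i)"
  unfolding val_def by auto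

lemma hole_bit_high: "c < 2 ^ k \<Longrightarrow> \<not> hole_bit c k"
  unfolding hole_bit_def by simp

lemma nat_bits_eq:
  fixes c c' :: nat
  assumes "c < 2 ^ r" "c' < 2 ^ r" "\<forall>j<r. hole_bit c j = hole_bit c' j"
  shows "c = c'"
proof (rule bit_eqI)
  fix j
  show "bit c j = bit c' j"
  proof (cases "j < r")
    case True then show ?thesis using assms(3) unfolding hole_bit_def by (simp add: bit_iff_odd)
  next
    case False
    then have "(2::nat) ^ r \<le> 2 ^ j" by simp
    then have "c div 2 ^ j = 0" "c' div 2 ^ j = 0" using assms
      by (metis div_less order_less_le_trans)+
    then show ?thesis by (simp add: bit_iff_odd)
  qed
qed

lemma val_inj:
  assumes "r \<ge> 1" "x i < 2 ^ (r - 1)" "x i' < 2 ^ (r - 1)" "\<forall>j<r. val \<rho> x i j = val \<rho> x i' j"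
  shows "x i = x i'"
proof -
  have h1: "\<not> hole_bit (x i) (r - 1)" "\<not> hole_bit (x i') (r - 1)" using assms hole_bit_high by auto
  have "val \<rho> x i (r - 1) = val \<rho> x i' (r - 1)" using assms by simp
  then have fl: "(hole_bit (x i) (fst (\<rho> i)) \<noteq> snd (\<rho> i)) = (hole_bit (x i') (fst (\<rho> i')) \<noteq> snd (\<rho> i'))"
    using h1 unfolding val_def by simp
  have "\<forall>j<r. hole_bit (x i) j = hole_bit (x i') j"
  proof (intro allI impI)
    fix j assume "j < r"
    then have "val \<rho> x i j = val \<rho> x i' j" using assms by simp
    then show "hole_bit (x i) j = hole_bit (x i') j" using fl unfolding val_def by auto
  qed
  moreover have "(2::nat) ^ (r - 1) \<le> 2 ^ r" by simp
  ultimately show ?thesis using nat_bits_eq[of "x i" r "x i'"] assms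
    by (meson order_less_le_trans)
qed


lemma Zf_sub:
  assumes "finite D" "pigeons_of D \<subseteq> P" "finite P" "card P \<le> N"
  shows "Zf N \<rho> D = Eavg N P (\<lambda>x. ind \<rho> x D)"
  unfolding Zf_def
  by (rule Eavg_sub[symmetric]) (use assms ind_resp in auto)

lemma Eavg_add: "Eavg N P f + Eavg N P g = Eavg N P (\<lambda>x. f x + g x)"
  unfolding Eavg_def by (simp add: sum.distrib add_divide_distrib)

lemma Eavg_mono: "(\<And>x. x \<in> injs N P \<Longrightarrow> f x \<le> g x) \<Longrightarrow> Eavg N P f \<le> Eavg N P g"
  unfolding Eavg_def by (intro divide_right_mono sum_mono) auto

lemma Eavg_nonneg: "(\<And>x. x \<in> injs N P \<Longrightarrow> 0 \<le> f x) \<Longrightarrow> 0 \<le> Eavg N P f"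
  unfolding Eavg_def by (intro divide_nonneg_nonneg sum_nonneg) auto

lemma Eavg_sum: "(\<Sum>l\<in>C. Eavg N P (f l)) = Eavg N P (\<lambda>x. \<Sum>l\<in>C. f l x)"
  unfolding Eavg_def by (simp add: sum_divide_distrib[symmetric] sum.swap[of _ C])

lemma Eavg_one: "Eavg N {} (\<lambda>x. 1) = 1"
proof -
  have "injs N {} = {\<lambda>_. undefined}" unfolding injs_def by auto
  then show ?thesis unfolding Eavg_def by simp
qed

lemma ind_nonneg: "0 \<le> ind \<rho> x D" unfolding ind_def by simp

lemma finite_php_clause: "finite (php_clause r a i i')"
proof -
  have "php_clause r a i i' = (\<lambda>j. ((i, j), \<not> hole_bit a j)) ` {..<r} \<union> (\<lambda>j. ((i', j), \<not> hole_bit a j)) ` {..<r}"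
    unfolding php_clause_def by auto
  then show ?thesis by simp
qed

lemma card_bound:
  fixes r k :: nat
  assumes "2 \<le> r" "4 * k < 2 ^ r"
  shows "k + 2 \<le> 2 ^ (r - 1)"
proof -
  have e: "(2::nat) ^ r = 2 * 2 ^ (r - 1)" using assms(1)
    by (metis Suc_diff_1 le_trans one_le_numeral power_Suc linorder_not_le not_one_le_zero zero_less_iff_neq_zero le_zero_eq)
  have "(2::nat) ^ 1 \<le> 2 ^ (r - 1)" using assms(1) by (intro power_increasing) auto
  then have "(2::nat) \<le> 2 ^ (r - 1)" by simp
  moreover have "\<And>M::nat. 2 \<le> M \<Longrightarrow> 4 * k < 2 * M \<Longrightarrow> k + 2 \<le> M" by arith
  ultimately show ?thesis using assms(2) e by metis
qed

lemma constr_holds: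
  assumes r: "2 \<le> r" and v: "sa_valid m r \<rho> c"
    and w: "\<forall>T\<in>sa_terms c. 4 * card (pigeons_of T) < 2 ^ r"
  shows "sa_holds (Zf (2 ^ (r - 1)) \<rho>) c"
proof -
  define N :: nat where "N = 2 ^ (r - 1)"
  show ?thesis
  proof (cases c)
    case (Clause_lift C D)
    have D: "finite D" using v Clause_lift by (simp add: conj_ok_def)
    have kD: "card (pigeons_of D) + 2 \<le> N" using w Clause_lift card_bound[OF r] N_def by simp
    from v Clause_lift have "C \<in> restr_clauses m r \<rho>" by simp
    then obtain a i i' where C: "C = {l \<in> php_clause r a i i'. \<not> is_fixed \<rho> (fst l)}"
      and ii: "i \<noteq> i'" and nt: "\<not> (\<exists>l\<in>php_clause r a i i'. lit_true \<rho> l)"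
      unfolding restr_clauses_def php_clauses_def by blast
    have finC: "finite C" unfolding C using finite_php_clause by simp
    define P where "P = insert i (insert i' (pigeons_of D))"
    have finP: "finite P" unfolding P_def using D finite_pigeons by simp
    have cP: "card P \<le> N"
    proof -
      have "card P \<le> card (pigeons_of D) + 2" unfolding P_def
        using D finite_pigeons by (simp add: card_insert_if)
      then show ?thesis using kD by simp
    qed
    have lp: "fst (fst l) \<in> {i, i'}" if "l \<in> C" for l
      using that unfolding C php_clause_def by auto
    have eqs: "Zf N \<rho> (insert l D) = Eavg N P (\<lambda>x. ind \<rho> x (insert l D))" if "l \<in> C" for l
      by (rule Zf_sub) (use D finP cP lp[OF that] in \<open>auto simp: pigeons_of_insert P_def\<close>)
    have eq0: "Zf N \<rho> D = Eavg N P (\<lambda>x. ind \<rho> x D)"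
      by (rule Zf_sub) (use D finP cP in \<open>auto simp: P_def\<close>)
    have "Zf N \<rho> D \<le> (\<Sum>l\<in>C. Zf N \<rho> (insert l D))"
    proof -
      have "Eavg N P (\<lambda>x. ind \<rho> x D) \<le> Eavg N P (\<lambda>x. \<Sum>l\<in>C. ind \<rho> x (insert l D))"
      proof (rule Eavg_mono)
        fix x assume x: "x \<in> injs N P"
        show "ind \<rho> x D \<le> (\<Sum>l\<in>C. ind \<rho> x (insert l D))"
        proof (cases "ind \<rho> x D = 0")
          case True then show ?thesis by (simp add: sum_nonneg ind_nonneg)
        next
          case False
          then have hD: "\<forall>l\<in>D. val \<rho> x (fst (fst l)) (snd (fst l)) = snd l"
            unfolding ind_def by (auto split: if_splits)
          have xi: "x i < N" "x i' < N" "x i \<noteq> x i'"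
            using x ii unfolding injs_def P_def by (auto simp: PiE_def Pi_def inj_on_def)
          have "\<exists>l\<in>C. val \<rho> x (fst (fst l)) (snd (fst l)) = snd l"
          proof (rule ccontr)
            assume nC: "\<not> ?thesis"
            have all: "val \<rho> x k j = hole_bit a j" if "k \<in> {i, i'}" "j < r" for k j
            proof (rule ccontr)
              assume ne: "val \<rho> x k j \<noteq> hole_bit a j"
              define l where "l = ((k, j), \<not> hole_bit a j)"
              have l0: "l \<in> php_clause r a i i'" using that unfolding l_def php_clause_def by auto
              show False
              proof (cases "is_fixed \<rho> (k, j)")
                case True
                then have "fst (\<rho> k) = j" unfolding is_fixed_def by simp
                then have "val \<rho> x k j = snd (\<rho> k)" using val_fixed by metis
                then have "lit_true \<rho> l" using True ne unfolding lit_true_def l_def by auto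
                then show False using nt l0 by blast
              next
                case False
                then have "l \<in> C" using l0 unfolding C l_def by simp
                then show False using nC ne unfolding l_def by auto
              qed
            qed
            have "x i = x i'"
              by (rule val_inj[of r x i i' \<rho>]) (use r xi all N_def in auto)
            then show False using xi by simp
          qed
          then obtain l where l: "l \<in> C" "val \<rho> x (fst (fst l)) (snd (fst l)) = snd l" by blast
          have "ind \<rho> x (insert l D) = 1" using hD l unfolding ind_def by auto
          then have "ind \<rho> x D \<le> ind \<rho> x (insert l D)" unfolding ind_def by auto
          also have "\<dots> \<le> (\<Sum>l\<in>C. ind \<rho> x (insert l D))"
            by (rule member_le_sum) (use l finC ind_nonneg in auto)
          finally show ?thesis .
        qed
      qed
      also have "\<dots> = (\<Sum>l\<in>C. Eavg N P (\<lambda>x. ind \<rho> x (insert l D)))" by (simp add: Eavg_sum)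
      also have "\<dots> = (\<Sum>l\<in>C. Zf N \<rho> (insert l D))" using eqs by simp
      finally show ?thesis using eq0 by simp
    qed
    then show ?thesis using Clause_lift N_def by simp
  next
    case (Neg_lift u D)
    have D: "finite D" using v Neg_lift by (simp add: conj_ok_def)
    define P where "P = pigeons_of (insert (u, True) D)"
    have finP: "finite P" unfolding P_def using D finite_pigeons by simp
    have "4 * card P < 2 ^ r" using w Neg_lift P_def by simp
    then have cP: "card P \<le> N" using card_bound[OF r, of "card P"] N_def by simp
    have "Zf N \<rho> (insert (u, True) D) + Zf N \<rho> (insert (u, False) D) = Zf N \<rho> D"
    proof -
      have "Zf N \<rho> (insert (u, True) D) = Eavg N P (\<lambda>x. ind \<rho> x (insert (u, True) D))"
        by (rule Zf_sub) (use D finP cP in \<open>auto simp: P_def\<close>)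
      moreover have "Zf N \<rho> (insert (u, False) D) = Eavg N P (\<lambda>x. ind \<rho> x (insert (u, False) D))"
        by (rule Zf_sub) (use D finP cP in \<open>auto simp: P_def pigeons_of_insert\<close>)
      moreover have "Zf N \<rho> D = Eavg N P (\<lambda>x. ind \<rho> x D)"
        by (rule Zf_sub) (use D finP cP in \<open>auto simp: P_def pigeons_of_insert\<close>)
      moreover have "(\<lambda>x. ind \<rho> x (insert (u, True) D) + ind \<rho> x (insert (u, False) D)) = (\<lambda>x. ind \<rho> x D)"
      proof
        fix x
        show "ind \<rho> x (insert (u, True) D) + ind \<rho> x (insert (u, False) D) = ind \<rho> x D"
          unfolding ind_def by (cases "val \<rho> x (fst u) (snd u)") simp_all
      qed
      ultimately show ?thesis by (simp add: Eavg_add)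
    qed
    then show ?thesis using Neg_lift N_def by simp
  next
    case (Lower_lift l D)
    then show ?thesis unfolding Zf_def by (simp add: Eavg_nonneg ind_nonneg)
  next
    case (Upper_lift l D)
    have D: "finite D" using v Upper_lift by (simp add: conj_ok_def)
    define P where "P = pigeons_of (insert l D)"
    have finP: "finite P" unfolding P_def using D finite_pigeons by simp
    have "4 * card P < 2 ^ r" using w Upper_lift P_def by simp
    then have cP: "card P \<le> N" using card_bound[OF r, of "card P"] N_def by simp
    have "Zf N \<rho> D = Eavg N P (\<lambda>x. ind \<rho> x D)"
      by (rule Zf_sub) (use D finP cP in \<open>auto simp: P_def pigeons_of_insert\<close>)
    moreover have "Zf N \<rho> (insert l D) = Eavg N P (\<lambda>x. ind \<rho> x (insert l D))"
      unfolding Zf_def P_def by simp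
    moreover have "Eavg N P (\<lambda>x. ind \<rho> x (insert l D)) \<le> Eavg N P (\<lambda>x. ind \<rho> x D)"
      by (rule Eavg_mono) (auto simp: ind_def)
    ultimately show ?thesis using Upper_lift N_def by simp
  qed
qed


lemma width_conv:
  fixes r k :: nat
  assumes "2 \<le> r" "real k < real (2 ^ r) / (2 * log 2 (real (2 ^ r)))"
  shows "4 * k < 2 ^ r"
proof -
  have l: "log 2 (real (2 ^ r)) = real r" by simp
  have "real (2 ^ r) / (2 * real r) \<le> real (2 ^ r) / 4"
    using assms(1) by (intro divide_left_mono) auto
  then have "real k < real (2 ^ r) / 4" using assms(2) l by simp
  then have "real (4 * k) < real (2 ^ r)" by simp
  then show ?thesis by linarith
qed

theorem lemma6:
  fixes n m r :: nat
  assumes "n = 2 ^ r" and "2 \<le> r" and "m > n"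
  shows "real (card {\<rho> \<in> restrictions m r.
            \<exists>S. sa_refutation m r \<rho> S \<and>
                (\<forall>c\<in>S. \<forall>T\<in>sa_terms c. real (card (pigeons_of T)) < real n / (2 * log 2 (real n)))})
         / real (card (restrictions m r))
       \<le> exp (- real n / (32 * (log 2 (real n))\<^sup>2))"
proof -
  have E: "{\<rho> \<in> restrictions m r.
            \<exists>S. sa_refutation m r \<rho> S \<and>
                (\<forall>c\<in>S. \<forall>T\<in>sa_terms c. real (card (pigeons_of T)) < real n / (2 * log 2 (real n)))} = {}"
  proof (rule ccontr)
    assume "\<not> ?thesis"
    then obtain \<rho> S where ref: "sa_refutation m r \<rho> S"
      and wd: "\<forall>c\<in>S. \<forall>T\<in>sa_terms c. real (card (pigeons_of T)) < real n / (2 * log 2 (real n))"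
      by blast
    have hold: "sa_holds (Zf (2 ^ (r - 1)) \<rho>) c" if "c \<in> S" for c
    proof (rule constr_holds[OF assms(2)])
      show "sa_valid m r \<rho> c" using ref that unfolding sa_refutation_def by blast
      show "\<forall>T\<in>sa_terms c. 4 * card (pigeons_of T) < 2 ^ r"
        using wd that width_conv[OF assms(2)] assms(1) by blast
    qed
    have "Zf (2 ^ (r - 1)) \<rho> {} = 1"
    proof -
      have "(\<lambda>x. ind \<rho> x {}) = (\<lambda>x. 1)" unfolding ind_def by simp
      moreover have "pigeons_of {} = {}" unfolding pigeons_of_def by simp
      ultimately show ?thesis unfolding Zf_def using Eavg_one by simp
    qed
    then show False using ref hold unfolding sa_refutation_def by blast
  qed
  show ?thesis unfolding E by simp
qed

end
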